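(* Let $N\ge2$ and $\nu_1,\dots,\nu_N\in\mathcal{M}_h\cap\Delta$. Let $\boldsymbol{\sigma}=(\boldsymbol{\sigma}_1,\dots,\boldsymbol{\sigma}_N)\in\mathcal{S}_h^N$ and $\nu\in\mathcal{M}_h\cap\Delta$. Then each equation $-\Delta_h\xi_i'=\mathrm{div}_h\boldsymbol{\sigma}_i+\nu_i-\nu$ ($i=1,\dots,N$) admits a solution, and for any choice of such solutions $\xi_1',\dots,\xi_N'$, the Euclidean projection $(\widetilde{\boldsymbol{\sigma}},\widetilde\nu)$ of $(\boldsymbol{\sigma},\nu)$ onto $$\mathcal{F}_h=\{(\boldsymbol{\sigma}_1,\dots,\boldsymbol{\sigma}_N,\mu)\in\mathcal{S}_h^N\times\mathcal{M}_h:\mathrm{div}_h\boldsymbol{\sigma}_k+\nu_k=\mu\ \forall k\}$$ is given by $\widetilde{\boldsymbol{\sigma}}_i=\boldsymbol{\sigma}_i+\nabla_h\xi_i$ and $\widetilde\nu=\nu+\xi_1+\dots+\xi_N$, where $\xi_i=\xi_i'-(I-\tfrac1N\Delta_h)^{-1}\big(\tfrac1N\sum_{j=1}^N\xi_j'\big)$.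
   Context: Grid $\mathcal{G}_h=\{hi:i=1,\dots,p\}^2$ with $h=1/p$; $\mathcal{M}_h=\{\mu:\mathcal{G}_h\to\mathbb{R}\}\cong\mathbb{R}^{p^2}$, $\mathcal{S}_h=\{\boldsymbol{\sigma}:\mathcal{G}_h\to\mathbb{R}^2\}\cong\mathbb{R}^{p^2\times2}$, both with the standard $\ell^2$ inner products (and the product inner product on $\mathcal{S}_h^N\times\mathcal{M}_h$, with respect to which the projection is taken). $\Delta\subset\mathcal{M}_h$ is the unit simplex (nonnegative entries summing to 1). $\nabla_h:\mathcal{M}_h\to\mathcal{S}_h$ is the discrete gradient by forward differences with homogeneous Neumann boundary conditions: $(\nabla_hu)_{i,j}=(u_{i+1,j}-u_{i,j},\,u_{i,j+1}-u_{i,j})$, where a difference is set to $0$ when $i=p$ (resp. $j=p$); its kernel is the constants. $\mathrm{div}_h=-\nabla_h^*$ and $\Delta_h=\mathrm{div}_h\nabla_h$. *)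

theory Defs
  imports "HOL-Analysis.Analysis"
begin

text \<open>Grid G_h = {1..p} x {1..p}. Mesh functions are functions on nat x nat that vanish
  off the grid (so M_h is identified with R^(p^2), S_h with R^(p^2 x 2)).\<close>

definition grid :: "nat \<Rightarrow> (nat \<times> nat) set" where
  "grid p = {1..p} \<times> {1..p}"

definition meshM :: "nat \<Rightarrow> (nat \<times> nat \<Rightarrow> real) set" where
  "meshM p = {u. \<forall>x. x \<notin> grid p \<longrightarrow> u x = 0}"

definition meshS :: "nat \<Rightarrow> (nat \<times> nat \<Rightarrow> real \<times> real) set" where
  "meshS p = {s. \<forall>x. x \<notin> grid p \<longrightarrow> s x = 0}"

definition ipM :: "nat \<Rightarrow> (nat \<times> nat \<Rightarrow> real) \<Rightarrow> (nat \<times> nat \<Rightarrow> real) \<Rightarrow> real" where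
  "ipM p u v = (\<Sum>x\<in>grid p. u x * v x)"

definition ipS :: "nat \<Rightarrow> (nat \<times> nat \<Rightarrow> real \<times> real) \<Rightarrow> (nat \<times> nat \<Rightarrow> real \<times> real) \<Rightarrow> real" where
  "ipS p s t = (\<Sum>x\<in>grid p. fst (s x) * fst (t x) + snd (s x) * snd (t x))"

text \<open>Forward-difference gradient with homogeneous Neumann boundary conditions.\<close>
definition grad_h :: "nat \<Rightarrow> (nat \<times> nat \<Rightarrow> real) \<Rightarrow> (nat \<times> nat \<Rightarrow> real \<times> real)" where
  "grad_h p u = (\<lambda>(i, j). if (i, j) \<in> grid p then
      ((if i < p then u (i + 1, j) - u (i, j) else 0),
       (if j < p then u (i, j + 1) - u (i, j) else 0))
    else (0, 0))"

text \<open>div_h = - grad_h^*, written out explicitly (adjoint w.r.t. the l2 inner products).\<close>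
definition div_h :: "nat \<Rightarrow> (nat \<times> nat \<Rightarrow> real \<times> real) \<Rightarrow> (nat \<times> nat \<Rightarrow> real)" where
  "div_h p s = (\<lambda>(i, j). if (i, j) \<in> grid p then
      (if i < p then fst (s (i, j)) else 0) - (if 1 < i then fst (s (i - 1, j)) else 0)
    + (if j < p then snd (s (i, j)) else 0) - (if 1 < j then snd (s (i, j - 1)) else 0)
    else 0)"

definition lap_h :: "nat \<Rightarrow> (nat \<times> nat \<Rightarrow> real) \<Rightarrow> (nat \<times> nat \<Rightarrow> real)" where
  "lap_h p u = div_h p (grad_h p u)"

definition unit_simplex :: "nat \<Rightarrow> (nat \<times> nat \<Rightarrow> real) set" where
  "unit_simplex p = {u \<in> meshM p. (\<forall>x\<in>grid p. 0 \<le> u x) \<and> (\<Sum>x\<in>grid p. u x) = 1}"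

definition resolv :: "nat \<Rightarrow> nat \<Rightarrow> (nat \<times> nat \<Rightarrow> real) \<Rightarrow> (nat \<times> nat \<Rightarrow> real)" where
  "resolv p N f = (THE w. w \<in> meshM p \<and> (\<lambda>x. w x - lap_h p w x / real N) = f)"

definition Fh :: "nat \<Rightarrow> nat \<Rightarrow> (nat \<Rightarrow> nat \<times> nat \<Rightarrow> real)
    \<Rightarrow> ((nat \<Rightarrow> nat \<times> nat \<Rightarrow> real \<times> real) \<times> (nat \<times> nat \<Rightarrow> real)) set" where
  "Fh p N nus = {(s, mu). (\<forall>k\<in>{1..N}. s k \<in> meshS p) \<and> mu \<in> meshM p \<and>
      (\<forall>k\<in>{1..N}. (\<lambda>x. div_h p (s k) x + nus k x) = mu)}"

definition dist2 :: "nat \<Rightarrow> nat \<Rightarrow> (nat \<Rightarrow> nat \<times> nat \<Rightarrow> real \<times> real) \<times> (nat \<times> nat \<Rightarrow> real)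
    \<Rightarrow> (nat \<Rightarrow> nat \<times> nat \<Rightarrow> real \<times> real) \<times> (nat \<times> nat \<Rightarrow> real) \<Rightarrow> real" where
  "dist2 p N a b = (\<Sum>k=1..N. ipS p (fst a k - fst b k) (fst a k - fst b k))
      + ipM p (snd a - snd b) (snd a - snd b)"

definition is_proj :: "nat \<Rightarrow> nat \<Rightarrow> ((nat \<Rightarrow> nat \<times> nat \<Rightarrow> real \<times> real) \<times> (nat \<times> nat \<Rightarrow> real)) set
    \<Rightarrow> (nat \<Rightarrow> nat \<times> nat \<Rightarrow> real \<times> real) \<times> (nat \<times> nat \<Rightarrow> real)
    \<Rightarrow> (nat \<Rightarrow> nat \<times> nat \<Rightarrow> real \<times> real) \<times> (nat \<times> nat \<Rightarrow> real) \<Rightarrow> bool" where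
  "is_proj p N C a y \<longleftrightarrow> y \<in> C \<and> (\<forall>z\<in>C. dist2 p N a y \<le> dist2 p N a z)"

end

theory Submission
  imports Defs "HOL-Library.Function_Algebras"
begin


lemma shift0: "(\<Sum>i\<in>{1..(p::nat)}. if i < p then g (i+1) else 0) = (\<Sum>i\<in>{1..p}. if 1 < i then g i else (0::real))"
proof -
  have e1: "{i\<in>{1..p}. i<p} = {1..<p}" by auto
  have e2: "{i\<in>{1..p}. 1<i} = {1+1..<p+1}" by auto
  have "(\<Sum>i\<in>{1..p}. if i < p then g (i+1) else 0) = (\<Sum>i\<in>{1..<p}. g (i+1))"
    using sum.inter_filter[of "{1..p}" "\<lambda>i. g (i+1)" "\<lambda>i. i<p"] e1 by simp
  also have "\<dots> = (\<Sum>i\<in>{1+1..<p+1}. g i)"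
    by (rule sum.shift_bounds_nat_ivl[symmetric])
  also have "\<dots> = (\<Sum>i\<in>{1..p}. if 1 < i then g i else (0::real))"
    using sum.inter_filter[of "{1..p}" "g" "\<lambda>i. 1<i"] e2 by simp
  finally show ?thesis .
qed

lemma shift1: "(\<Sum>i\<in>{1..(p::nat)}. if i < p then f (i+1) i else 0) = (\<Sum>i\<in>{1..p}. if 1 < i then f i (i-1) else (0::real))"
proof -
  have "(\<Sum>i\<in>{1..(p::nat)}. if i < p then f (i+1) i else 0) = (\<Sum>i\<in>{1..(p::nat)}. if i < p then (\<lambda>k. f k (k-1)) (i+1) else 0)"
    by (rule sum.cong) auto
  also have "\<dots> = (\<Sum>i\<in>{1..p}. if 1 < i then f i (i-1) else (0::real))"
    by (rule shift0)
  finally show ?thesis .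
qed

lemma grid_sum: "(\<Sum>x\<in>grid p. f x) = (\<Sum>i=1..p. \<Sum>j=1..p. f (i,j))"
  unfolding grid_def by (simp add: sum.cartesian_product)

lemma adjoint: "ipS p (grad_h p u) s = - ipM p u (div_h p s)"
proof -
  have A: "(\<Sum>i=1..p. \<Sum>j=1..p. (if i<p then u(i+1,j) * fst (s (i,j)) else 0))
        = (\<Sum>i=1..p. \<Sum>j=1..p. (if 1<i then u(i,j) * fst (s (i-1,j)) else 0))"
    apply (subst (1 2) sum.swap)
    apply (rule sum.cong[OF refl])
    subgoal for j using shift1[of p "\<lambda>a b. u(a,j) * fst (s (b,j))"] by simp
    done
  have B: "(\<Sum>i=1..p. \<Sum>j=1..p. (if j<p then u(i,j+1) * snd (s (i,j)) else 0))
        = (\<Sum>i=1..p. \<Sum>j=1..p. (if 1<j then u(i,j) * snd (s (i,j-1)) else 0))"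
    apply (rule sum.cong[OF refl])
    subgoal for i using shift1[of p "\<lambda>a b. u(i,a) * snd (s (i,b))"] by simp
    done
  have "ipS p (grad_h p u) s + ipM p u (div_h p s) =
     (\<Sum>i=1..p. \<Sum>j=1..p. (if i<p then u(i+1,j) * fst (s (i,j)) else 0))
   - (\<Sum>i=1..p. \<Sum>j=1..p. (if 1<i then u(i,j) * fst (s (i-1,j)) else 0))
   + (\<Sum>i=1..p. \<Sum>j=1..p. (if j<p then u(i,j+1) * snd (s (i,j)) else 0))
   - (\<Sum>i=1..p. \<Sum>j=1..p. (if 1<j then u(i,j) * snd (s (i,j-1)) else 0))"
    unfolding ipS_def ipM_def grid_sum sum.distrib[symmetric] sum_subtractf[symmetric]
    apply (rule sum.cong[OF refl])+
    by (auto simp: grad_h_def div_h_def grid_def algebra_simps)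
  then show ?thesis using A B by simp
qed



lemma sum_fun_apply: "(sum f A) x = (\<Sum>a\<in>A. (f a x :: 'b::comm_monoid_add))"
  by (induction A rule: infinite_finite_induct) auto

lemma fun_vs: "vector_space (\<lambda>c (f::'a\<Rightarrow>real) x. c * f x)"
  by unfold_locales (auto simp: fun_eq_iff algebra_simps)

lemma inj_surj:
  fixes L :: "('a \<Rightarrow> real) \<Rightarrow> ('a \<Rightarrow> real)" and S :: "'a set"
  assumes fin: "finite S"
    and add: "\<And>u v. L (\<lambda>x. u x + v x) = (\<lambda>x. L u x + L v x)"
    and scl: "\<And>c u. L (\<lambda>x. c * u x) = (\<lambda>x. c * L u x)"
    and into: "\<And>u y. y \<notin> S \<Longrightarrow> L u y = 0"
    and inj: "\<And>u. (\<forall>y. y \<notin> S \<longrightarrow> u y = 0) \<Longrightarrow> L u = (\<lambda>_. 0) \<Longrightarrow> u = (\<lambda>_. 0)"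
    and f: "\<forall>y. y \<notin> S \<longrightarrow> f y = 0"
  shows "\<exists>u. (\<forall>y. y \<notin> S \<longrightarrow> u y = 0) \<and> L u = f"
proof -
  define sc where "sc = (\<lambda>c (f::'a\<Rightarrow>real) x. c * f x)"
  interpret V: vector_space sc unfolding sc_def by (rule fun_vs)
  have lin: "Vector_Spaces.linear sc sc L"
    unfolding Vector_Spaces.linear_iff using V.vector_space_axioms
    by (auto simp: sc_def plus_fun_def add scl)
  interpret Lh: Vector_Spaces.linear sc sc L by (rule lin)
  define W where "W = {u::'a\<Rightarrow>real. \<forall>y. y \<notin> S \<longrightarrow> u y = 0}"
  define e where "e = (\<lambda>s::'a. \<lambda>x::'a. if x = s then 1 else (0::real))"
  define B where "B = e ` S"
  have subW: "V.subspace W"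
    unfolding V.subspace_def by (auto simp: W_def sc_def zero_fun_def)
  have spanB: "V.span B = W"
  proof
    show "V.span B \<subseteq> W"
      by (rule V.span_minimal[OF _ subW]) (auto simp: B_def e_def W_def)
    show "W \<subseteq> V.span B"
    proof
      fix u assume u: "u \<in> W"
      have "u = (\<Sum>s\<in>S. sc (u s) (e s))"
        using u fin by (auto simp: fun_eq_iff sum_fun_apply sc_def e_def W_def if_distrib cong: if_cong)
      also have "\<dots> \<in> V.span B"
        by (intro V.span_sum V.span_scale V.span_base) (auto simp: B_def)
      finally show "u \<in> V.span B" .
    qed
  qed
  have indB: "V.independent B"
    unfolding V.dependent_def
  proof
    assume "\<exists>a\<in>B. a \<in> V.span (B - {a})"
    then obtain s where s: "s \<in> S" "e s \<in> V.span (B - {e s})" by (auto simp: B_def)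
    have "V.span (B - {e s}) \<subseteq> {g. g s = 0}"
      by (rule V.span_minimal) (unfold V.subspace_def, auto simp: B_def e_def sc_def zero_fun_def)
    with s show False by (auto simp: e_def)
  qed
  have injL: "inj_on L (V.span B)"
  proof (rule inj_onI)
    fix u v assume uv: "u \<in> V.span B" "v \<in> V.span B" "L u = L v"
    have e1: "L (\<lambda>x. u x + (-1) * v x) = (\<lambda>x. L u x + L (\<lambda>x. (-1) * v x) x)" by (rule add)
    have e2: "L (\<lambda>x. (-1) * v x) = (\<lambda>x. (-1) * L v x)" by (rule scl)
    have z: "L (\<lambda>x. u x + (-1) * v x) = (\<lambda>_. 0)" unfolding e1 e2 uv(3) by simp
    have w: "(\<forall>y. y \<notin> S \<longrightarrow> (\<lambda>x. u x + (-1) * v x) y = 0)"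
      using uv(1,2) spanB unfolding W_def by auto
    have "(\<lambda>x. u x + (-1) * v x) = (\<lambda>_. 0)" by (rule inj[OF w z])
    then show "u = v" by (simp add: fun_eq_iff)
  qed
  have indLB: "V.independent (L ` B)"
    by (rule Lh.independent_injective_image[OF indB injL])
  have finB: "finite B" using fin by (simp add: B_def)
  have cardLB: "card (L ` B) = card B"
    using injL by (intro card_image inj_on_subset[OF injL]) (auto intro: V.span_base)
  have LBW: "L ` B \<subseteq> W"
    using into by (auto simp: W_def)
  have "W \<subseteq> V.span (L ` B)"
  proof
    fix g assume g: "g \<in> W"
    show "g \<in> V.span (L ` B)"
    proof (rule ccontr)
      assume "g \<notin> V.span (L ` B)"
      then have ind2: "V.independent (insert g (L ` B))"
        using indLB by (rule V.independent_insertI)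
      have sub2: "insert g (L ` B) \<subseteq> V.span B" using g LBW spanB by auto
      have "finite (insert g (L ` B)) \<and> card (insert g (L ` B)) \<le> card B"
        by (rule V.independent_span_bound[OF finB ind2 sub2])
      moreover have "g \<notin> L ` B" using \<open>g \<notin> V.span (L ` B)\<close> V.span_base by blast
      ultimately show False using cardLB finB by simp
    qed
  qed
  then have "f \<in> L ` V.span B"
    using f Lh.span_image[of B] by (auto simp: W_def)
  then show ?thesis using spanB by (auto simp: W_def)
qed



lemma grad_meshS: "grad_h p u \<in> meshS p"
  by (auto simp: meshS_def grad_h_def zero_prod_def)
lemma div_meshM: "div_h p s \<in> meshM p"
  by (auto simp: meshM_def div_h_def)
lemma lap_meshM: "lap_h p u \<in> meshM p"
  by (simp add: lap_h_def div_meshM)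
lemma lap_off: "x \<notin> grid p \<Longrightarrow> lap_h p u x = 0"
  using lap_meshM[of p u] by (cases x) (auto simp: meshM_def)

lemma grad_lin: "grad_h p (\<lambda>x. a * u x + b * v x) = (\<lambda>x. a *\<^sub>R grad_h p u x + b *\<^sub>R grad_h p v x)"
  by (auto simp: fun_eq_iff grad_h_def algebra_simps)

lemma div_lin: "div_h p (\<lambda>x. a *\<^sub>R s x + b *\<^sub>R t x) = (\<lambda>x. a * div_h p s x + b * div_h p t x)"
  by (auto simp: fun_eq_iff div_h_def algebra_simps)

lemma lap_lin: "lap_h p (\<lambda>x. a * u x + b * v x) = (\<lambda>x. a * lap_h p u x + b * lap_h p v x)"
  unfolding lap_h_def grad_lin div_lin ..

lemma lap_add: "lap_h p (\<lambda>x. u x + v x) = (\<lambda>x. lap_h p u x + lap_h p v x)"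
  using lap_lin[of p 1 u 1 v] by simp
lemma lap_scl: "lap_h p (\<lambda>x. c * u x) = (\<lambda>x. c * lap_h p u x)"
  using lap_lin[of p c u 0 u] by simp
lemma lap_diff: "lap_h p (\<lambda>x. u x - v x) = (\<lambda>x. lap_h p u x - lap_h p v x)"
  using lap_lin[of p 1 u "-1" v] by simp
lemma div_add: "div_h p (\<lambda>x. s x + t x) = (\<lambda>x. div_h p s x + div_h p t x)"
  using div_lin[of p 1 s 1 t] by simp
lemma div_diff: "div_h p (\<lambda>x. s x - t x) = (\<lambda>x. div_h p s x - div_h p t x)"
  using div_lin[of p 1 s "-1" t] by (simp add: algebra_simps)

lemma lap_self: "ipM p u (lap_h p u) = - ipS p (grad_h p u) (grad_h p u)"
  using adjoint[of p u "grad_h p u"] by (simp add: lap_h_def)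

lemma ipS_nonneg: "0 \<le> ipS p s s"
  unfolding ipS_def by (intro sum_nonneg) simp
lemma ipM_nonneg: "0 \<le> ipM p u u"
  unfolding ipM_def by (intro sum_nonneg) simp

lemma ipS_zero: assumes "ipS p s s = 0" "x \<in> grid p" shows "s x = 0"
proof -
  have fin: "finite (grid p)" by (simp add: grid_def)
  have "\<forall>y\<in>grid p. fst (s y) * fst (s y) + snd (s y) * snd (s y) = 0"
    using assms(1) unfolding ipS_def by (subst sum_nonneg_eq_0_iff[OF fin, symmetric]) auto
  then have "fst (s x) * fst (s x) + snd (s x) * snd (s x) = 0" using assms(2) by blast
  then have "fst (s x) = 0" "snd (s x) = 0" by (simp_all add: add_nonneg_eq_0_iff)
  then show ?thesis by (simp add: prod_eq_iff)
qed

lemma ipM_zero: assumes "ipM p u u = 0" "x \<in> grid p" shows "u x = 0"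
proof -
  have fin: "finite (grid p)" by (simp add: grid_def)
  have "\<forall>y\<in>grid p. u y * u y = 0"
    using assms(1) unfolding ipM_def by (subst sum_nonneg_eq_0_iff[OF fin, symmetric]) auto
  then show ?thesis using assms(2) by auto
qed

lemma grad_zero_const:
  assumes g: "\<And>x. x \<in> grid p \<Longrightarrow> grad_h p u x = 0" and x: "x \<in> grid p"
  shows "u x = u (1,1)"
proof -
  have r1: "u (i+1,j) = u (i,j)" if "1 \<le> i" "i < p" "1 \<le> j" "j \<le> p" for i j
    using g[of "(i,j)"] that by (auto simp: grad_h_def grid_def zero_prod_def)
  have r2: "u (i,j+1) = u (i,j)" if "1 \<le> i" "i \<le> p" "1 \<le> j" "j < p" for i j
    using g[of "(i,j)"] that by (auto simp: grad_h_def grid_def zero_prod_def)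
  have c1: "u (k+1,j) = u (1,j)" if "k+1 \<le> p" "1 \<le> j" "j \<le> p" for k j
    using that by (induction k) (auto simp: r1[symmetric])
  have c2: "u (1,k+1) = u (1,1)" if "k+1 \<le> p" for k
    using that by (induction k) (auto simp: r2[symmetric])
  obtain i j where ij: "x = (i,j)" "1 \<le> i" "i \<le> p" "1 \<le> j" "j \<le> p" using x by (auto simp: grid_def)
  then show ?thesis using c1[of "i-1" j] c2[of "j-1"] by simp
qed

lemma sum_div0: "(\<Sum>x\<in>grid p. div_h p s x) = 0"
proof -
  have "grad_h p (\<lambda>_. 1) = (\<lambda>_. 0)" by (auto simp: fun_eq_iff grad_h_def zero_prod_def)
  then have "ipS p (grad_h p (\<lambda>_. 1)) s = 0" by (simp add: ipS_def)
  then show ?thesis using adjoint[of p "\<lambda>_. 1" s] by (simp add: ipM_def)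
qed

lemma sum_lap0: "(\<Sum>x\<in>grid p. lap_h p u x) = 0"
  unfolding lap_h_def by (rule sum_div0)



lemma finite_grid: "finite (grid p)" by (simp add: grid_def)
lemma card_grid: "card (grid p) = p * p" by (simp add: grid_def card_cartesian_product)

lemma poisson:
  assumes p: "1 \<le> p" and g: "g \<in> meshM p" and s: "(\<Sum>x\<in>grid p. g x) = 0"
  shows "\<exists>u\<in>meshM p. (\<lambda>x. - lap_h p u x) = g"
proof -
  define L where "L = (\<lambda>u x. - lap_h p u x + (if x \<in> grid p then (\<Sum>y\<in>grid p. u y) else 0))"
  have add: "L (\<lambda>x. u x + v x) = (\<lambda>x. L u x + L v x)" for u v
    by (auto simp: L_def lap_add sum.distrib fun_eq_iff)
  have scl: "L (\<lambda>x. c * u x) = (\<lambda>x. c * L u x)" for c u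
    by (auto simp: L_def lap_scl sum_distrib_left fun_eq_iff algebra_simps)
  have into: "y \<notin> grid p \<Longrightarrow> L u y = 0" for u y
    by (simp add: L_def lap_off)
  have inj: "u = (\<lambda>_. 0)" if u: "\<forall>y. y \<notin> grid p \<longrightarrow> u y = 0" and Lu: "L u = (\<lambda>_. 0)" for u
  proof -
    have "ipM p u (L u) = ipS p (grad_h p u) (grad_h p u) + (\<Sum>y\<in>grid p. u y) * (\<Sum>y\<in>grid p. u y)"
    proof -
      have "ipM p u (L u) = (\<Sum>x\<in>grid p. - (u x * lap_h p u x) + u x * (\<Sum>y\<in>grid p. u y))"
        unfolding ipM_def by (rule sum.cong) (auto simp: L_def algebra_simps)
      also have "\<dots> = - ipM p u (lap_h p u) + (\<Sum>x\<in>grid p. u x * (\<Sum>y\<in>grid p. u y))"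
        by (simp add: ipM_def sum.distrib sum_negf sum_subtractf)
      also have "\<dots> = ipS p (grad_h p u) (grad_h p u) + (\<Sum>y\<in>grid p. u y) * (\<Sum>y\<in>grid p. u y)"
        by (simp add: lap_self sum_distrib_right)
      finally show ?thesis .
    qed
    moreover have "ipM p u (L u) = 0" using Lu by (simp add: ipM_def)
    moreover have "0 \<le> (\<Sum>y\<in>grid p. u y) * (\<Sum>y\<in>grid p. u y)" by simp
    ultimately have z1: "ipS p (grad_h p u) (grad_h p u) = 0" and "(\<Sum>y\<in>grid p. u y) * (\<Sum>y\<in>grid p. u y) = 0"
      using ipS_nonneg[of p "grad_h p u"] by linarith+
    then have z2: "(\<Sum>y\<in>grid p. u y) = 0" by simp
    have c: "u x = u (1,1)" if "x \<in> grid p" for x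
      by (rule grad_zero_const[OF ipS_zero[OF z1] that])
    have "(\<Sum>y\<in>grid p. u y) = real (p*p) * u (1,1)"
      using c by (simp add: card_grid[symmetric])
    with z2 p have "u (1,1) = 0" by simp
    then show ?thesis using c u by (auto simp: fun_eq_iff)
  qed
  have g': "\<forall>y. y \<notin> grid p \<longrightarrow> g y = 0" using g by (simp add: meshM_def)
  obtain u where u: "\<forall>y. y \<notin> grid p \<longrightarrow> u y = 0" "L u = g"
    using inj_surj[of "grid p" L g, OF finite_grid add scl into inj g'] by blast
  have "(\<Sum>x\<in>grid p. L u x) = (\<Sum>x\<in>grid p. - lap_h p u x + (\<Sum>y\<in>grid p. u y))"
    by (rule sum.cong) (auto simp: L_def)
  also have "\<dots> = real (p*p) * (\<Sum>y\<in>grid p. u y)"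
    by (simp only: sum.distrib sum_negf sum_lap0 sum_constant card_grid)
  finally have "(\<Sum>x\<in>grid p. g x) = real (p*p) * (\<Sum>y\<in>grid p. u y)"
    using u(2) by simp
  with s p have su: "(\<Sum>y\<in>grid p. u y) = 0" by simp
  have "- lap_h p u x = g x" for x
  proof (cases "x \<in> grid p")
    case True
    have "L u x = g x" using u(2) by simp
    then show ?thesis using True su by (simp add: L_def)
  next
    case False
    then show ?thesis using g'[rule_format, OF False] lap_off[OF False] by simp
  qed
  then have "(\<lambda>x. - lap_h p u x) = g" by (simp add: fun_eq_iff)
  then show ?thesis using u(1) by (auto simp: meshM_def)
qed

lemma resolv_spec:
  assumes N: "0 < N" and f: "f \<in> meshM p"
  shows "resolv p N f \<in> meshM p \<and> (\<lambda>x. resolv p N f x - lap_h p (resolv p N f) x / real N) = f"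
proof -
  define L where "L = (\<lambda>u x. (if x \<in> grid p then u x else 0) - lap_h p u x / real N)"
  have add: "L (\<lambda>x. u x + v x) = (\<lambda>x. L u x + L v x)" for u v
    by (auto simp: L_def lap_add fun_eq_iff add_divide_distrib)
  have scl: "L (\<lambda>x. c * u x) = (\<lambda>x. c * L u x)" for c u
    by (auto simp: L_def lap_scl fun_eq_iff algebra_simps)
  have into: "y \<notin> grid p \<Longrightarrow> L u y = 0" for u y
    by (simp add: L_def lap_off)
  have inj: "u = (\<lambda>_. 0)" if u: "\<forall>y. y \<notin> grid p \<longrightarrow> u y = 0" and Lu: "L u = (\<lambda>_. 0)" for u
  proof -
    have "ipM p u (L u) = (\<Sum>x\<in>grid p. u x * u x - u x * lap_h p u x / real N)"
      unfolding ipM_def by (rule sum.cong) (auto simp: L_def algebra_simps)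
    also have "\<dots> = ipM p u u - ipM p u (lap_h p u) / real N"
      by (simp only: ipM_def sum_subtractf sum_divide_distrib)
    also have "\<dots> = ipM p u u + ipS p (grad_h p u) (grad_h p u) / real N"
      by (simp add: lap_self)
    finally have e: "ipM p u (L u) = ipM p u u + ipS p (grad_h p u) (grad_h p u) / real N" .
    moreover have "ipM p u (L u) = 0" using Lu by (simp add: ipM_def)
    moreover have "0 \<le> ipS p (grad_h p u) (grad_h p u) / real N"
      using ipS_nonneg[of p "grad_h p u"] N by simp
    ultimately have z: "ipM p u u = 0"
      using ipM_nonneg[of p u] by linarith
    have "u x = 0" for x
    proof (cases "x \<in> grid p")
      case True then show ?thesis using ipM_zero[OF z] by blast
    next
      case False then show ?thesis using u by blast
    qed
    then show ?thesis by (simp add: fun_eq_iff)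
  qed
  have Leq: "L u = (\<lambda>x. u x - lap_h p u x / real N)" if "u \<in> meshM p" for u
  proof -
    have "L u x = u x - lap_h p u x / real N" for x
    proof (cases "x \<in> grid p")
      case False
      then have "u x = 0" using that unfolding meshM_def by blast
      then show ?thesis using False by (simp add: L_def lap_off)
    qed (simp add: L_def)
    then show ?thesis by (simp add: fun_eq_iff)
  qed
  have f': "\<forall>y. y \<notin> grid p \<longrightarrow> f y = 0" using f by (simp add: meshM_def)
  obtain w where w: "\<forall>y. y \<notin> grid p \<longrightarrow> w y = 0" "L w = f"
    using inj_surj[of "grid p" L f, OF finite_grid add scl into inj f'] by blast
  have wm: "w \<in> meshM p" using w(1) by (simp add: meshM_def)
  have ex: "w \<in> meshM p \<and> (\<lambda>x. w x - lap_h p w x / real N) = f"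
    using wm w(2) Leq[OF wm] by simp
  have uniq: "v = w" if v: "v \<in> meshM p \<and> (\<lambda>x. v x - lap_h p v x / real N) = f" for v
  proof -
    have vm: "\<forall>y. y \<notin> grid p \<longrightarrow> (\<lambda>x. v x + (-1) * w x) y = 0"
      using v wm by (auto simp: meshM_def)
    have e1: "L (\<lambda>x. v x + (-1) * w x) = (\<lambda>x. L v x + L (\<lambda>x. (-1) * w x) x)" by (rule add)
    have e2: "L (\<lambda>x. (-1) * w x) = (\<lambda>x. (-1) * L w x)" by (rule scl)
    have Lv: "L v = f" using v Leq[of v] by simp
    have "L (\<lambda>x. v x + (-1) * w x) = (\<lambda>_. 0)" unfolding e1 e2 Lv w(2) by simp
    then have "(\<lambda>x. v x + (-1) * w x) = (\<lambda>_. 0)" by (rule inj[OF vm])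
    then show ?thesis by (simp add: fun_eq_iff)
  qed
  have "\<exists>!w. w \<in> meshM p \<and> (\<lambda>x. w x - lap_h p w x / real N) = f"
    using ex uniq by blast
  then show ?thesis unfolding resolv_def by (rule theI')
qed



lemma ipS_split: "ipS p (A - C) (A - C) = ipS p (A - B) (A - B) + ipS p (B - C) (B - C) + 2 * ipS p (A - B) (B - C)"
  unfolding ipS_def sum_distrib_left sum.distrib[symmetric]
  by (rule sum.cong) (auto simp: algebra_simps)

lemma ipM_split: "ipM p (A - C) (A - C) = ipM p (A - B) (A - B) + ipM p (B - C) (B - C) + 2 * ipM p (A - B) (B - C)"
  unfolding ipM_def sum_distrib_left sum.distrib[symmetric]
  by (rule sum.cong) (auto simp: algebra_simps)

lemma dist2_split: "dist2 p N a z = dist2 p N a y + dist2 p N y z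
   + 2 * ((\<Sum>k=1..N. ipS p (fst a k - fst y k) (fst y k - fst z k)) + ipM p (snd a - snd y) (snd y - snd z))"
proof -
  have e: "\<And>k. ipS p (fst a k - fst z k) (fst a k - fst z k) = ipS p (fst a k - fst y k) (fst a k - fst y k) + ipS p (fst y k - fst z k) (fst y k - fst z k) + 2 * ipS p (fst a k - fst y k) (fst y k - fst z k)"
    by (rule ipS_split)
  show ?thesis
    unfolding dist2_def e ipM_split[of p "snd a" "snd z" "snd y"]
    by (simp add: sum.distrib sum_distrib_left algebra_simps)
qed

lemma dist2_nonneg: "0 \<le> dist2 p N a b"
  unfolding dist2_def using ipS_nonneg ipM_nonneg by (simp add: sum_nonneg add_nonneg_nonneg)



theorem proposition7p1:
  fixes p N :: nat
    and nus :: "nat \<Rightarrow> nat \<times> nat \<Rightarrow> real"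
    and sigma :: "nat \<Rightarrow> nat \<times> nat \<Rightarrow> real \<times> real"
    and nu :: "nat \<times> nat \<Rightarrow> real"
  assumes "1 \<le> p" and "2 \<le> N"
    and "\<forall>k\<in>{1..N}. nus k \<in> unit_simplex p"
    and "\<forall>k\<in>{1..N}. sigma k \<in> meshS p"
    and "nu \<in> unit_simplex p"
  shows "(\<forall>i\<in>{1..N}. \<exists>xi' \<in> meshM p.
            (\<lambda>x. - lap_h p xi' x) = (\<lambda>x. div_h p (sigma i) x + nus i x - nu x))
       \<and> (\<forall>xi' :: nat \<Rightarrow> nat \<times> nat \<Rightarrow> real.
            (\<forall>i\<in>{1..N}. xi' i \<in> meshM p \<and>
               (\<lambda>x. - lap_h p (xi' i) x) = (\<lambda>x. div_h p (sigma i) x + nus i x - nu x))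
            \<longrightarrow> (let xi = (\<lambda>i x. xi' i x - resolv p N (\<lambda>y. (\<Sum>j=1..N. xi' j y) / real N) x)
                 in is_proj p N (Fh p N nus) (sigma, nu)
                      (\<lambda>i x. sigma i x + grad_h p (xi i) x,
                       \<lambda>x. nu x + (\<Sum>j=1..N. xi j x))))"
proof (intro conjI ballI allI impI)
  note p = assms(1)
  have N0: "0 < N" using assms(2) by simp
  have nusM: "nus k \<in> meshM p" "(\<Sum>x\<in>grid p. nus k x) = 1" if "k \<in> {1..N}" for k
    using assms(3) that by (auto simp: unit_simplex_def)
  have nuM: "nu \<in> meshM p" "(\<Sum>x\<in>grid p. nu x) = 1"
    using assms(5) by (auto simp: unit_simplex_def)
  have off: "u x = 0" if "u \<in> meshM p" "x \<notin> grid p" for u x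
    using that unfolding meshM_def by blast
  have offS: "s x = 0" if "s \<in> meshS p" "x \<notin> grid p" for s x
    using that unfolding meshS_def by blast
  {
    fix i assume i: "i \<in> {1..N}"
    define g where "g = (\<lambda>x. div_h p (sigma i) x + nus i x - nu x)"
    have gM: "g \<in> meshM p"
      using div_meshM[of p "sigma i"] nusM(1)[OF i] nuM(1) unfolding meshM_def g_def by auto
    have "(\<Sum>x\<in>grid p. g x) = (\<Sum>x\<in>grid p. div_h p (sigma i) x) + (\<Sum>x\<in>grid p. nus i x) - (\<Sum>x\<in>grid p. nu x)"
      unfolding g_def by (simp add: sum.distrib sum_subtractf)
    also have "\<dots> = 0" using sum_div0 nusM(2)[OF i] nuM(2) by simp
    finally have "(\<Sum>x\<in>grid p. g x) = 0" .
    from poisson[OF p gM this]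
    show "\<exists>xi' \<in> meshM p. (\<lambda>x. - lap_h p xi' x) = (\<lambda>x. div_h p (sigma i) x + nus i x - nu x)"
      unfolding g_def .
  }
  fix xi' :: "nat \<Rightarrow> nat \<times> nat \<Rightarrow> real"
  assume H: "\<forall>i\<in>{1..N}. xi' i \<in> meshM p \<and>
               (\<lambda>x. - lap_h p (xi' i) x) = (\<lambda>x. div_h p (sigma i) x + nus i x - nu x)"
  define F where "F = (\<lambda>y. (\<Sum>j=1..N. xi' j y) / real N)"
  define W where "W = resolv p N F"
  define xi where "xi = (\<lambda>i x. xi' i x - W x)"
  define Ys where "Ys = (\<lambda>i x. sigma i x + grad_h p (xi i) x)"
  define Ym where "Ym = (\<lambda>x. nu x + (\<Sum>j=1..N. xi j x))"
  have xi'M: "xi' j \<in> meshM p" if "j \<in> {1..N}" for j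
    using H that by blast
  have xi'0: "xi' j x = 0" if "j \<in> {1..N}" "x \<notin> grid p" for j x
    using off[OF xi'M[OF that(1)] that(2)] .
  have FM: "F \<in> meshM p"
    unfolding meshM_def F_def using xi'0 by simp
  have WM: "W \<in> meshM p" and Weq: "(\<lambda>x. W x - lap_h p W x / real N) = F"
    using resolv_spec[OF N0 FM] unfolding W_def by auto
  have Weq': "real N * W x - lap_h p W x = (\<Sum>j=1..N. xi' j x)" for x
  proof -
    have "W x - lap_h p W x / real N = (\<Sum>j=1..N. xi' j x) / real N"
      using fun_cong[OF Weq, of x] by (simp add: F_def)
    then show ?thesis using N0 by (simp add: field_simps)
  qed
  have lapxi': "lap_h p (xi' k) x = - (div_h p (sigma k) x + nus k x - nu x)" if "k \<in> {1..N}" for k x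
    using fun_cong[OF conjunct2[OF H[rule_format, OF that]], of x] by simp
  have xiM: "xi k \<in> meshM p" if "k \<in> {1..N}" for k
    unfolding meshM_def xi_def using xi'0[OF that] off[OF WM] by simp
  have YsE: "(\<lambda>x. div_h p (Ys k) x + nus k x) = Ym" if k: "k \<in> {1..N}" for k
  proof
    fix x
    have "div_h p (Ys k) x = div_h p (sigma k) x + lap_h p (xi k) x"
      unfolding Ys_def div_add lap_h_def ..
    also have "\<dots> = div_h p (sigma k) x + lap_h p (xi' k) x - lap_h p W x"
      unfolding xi_def lap_diff by simp
    also have "\<dots> = nu x - nus k x - lap_h p W x"
      using lapxi'[OF k] by simp
    finally have a: "div_h p (Ys k) x = nu x - nus k x - lap_h p W x" .
    have "(\<Sum>j=1..N. xi j x) = (\<Sum>j=1..N. xi' j x) - real N * W x"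
      unfolding xi_def by (simp add: sum_subtractf)
    then have "(\<Sum>j=1..N. xi j x) = - lap_h p W x" using Weq'[of x] by simp
    then show "div_h p (Ys k) x + nus k x = Ym x"
      using a unfolding Ym_def by simp
  qed
  have YsS: "Ys k \<in> meshS p" if "k \<in> {1..N}" for k
  proof -
    have "sigma k \<in> meshS p" using assms(4) that by blast
    then show ?thesis
      unfolding meshS_def Ys_def using offS[OF grad_meshS[of p "xi k"]] offS by simp
  qed
  have YmM: "Ym \<in> meshM p"
    unfolding meshM_def Ym_def using off[OF nuM(1)] off[OF xiM] by simp
  have YF: "(Ys, Ym) \<in> Fh p N nus"
    unfolding Fh_def using YsS YmM YsE by auto
  have "is_proj p N (Fh p N nus) (sigma, nu) (Ys, Ym)"
    unfolding is_proj_def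
  proof (intro conjI ballI)
    show "(Ys, Ym) \<in> Fh p N nus" by (rule YF)
    fix z assume z: "z \<in> Fh p N nus"
    obtain t m where tm: "z = (t, m)" by (cases z)
    have tE: "(\<lambda>x. div_h p (t k) x + nus k x) = m" if "k \<in> {1..N}" for k
      using z that unfolding tm Fh_def by auto
    define E where "E = Ym - m"
    have divD: "div_h p (Ys k - t k) = E" if k: "k \<in> {1..N}" for k
    proof
      fix x
      have "div_h p (Ys k - t k) x = div_h p (Ys k) x - div_h p (t k) x"
        using div_diff[of p "Ys k" "t k"] by (simp add: fun_diff_def)
      also have "\<dots> = Ym x - m x"
        using fun_cong[OF YsE[OF k], of x] fun_cong[OF tE[OF k], of x] by simp
      finally show "div_h p (Ys k - t k) x = E x" by (simp add: E_def)
    qed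
    have t1: "ipS p (sigma k - Ys k) (Ys k - t k) = ipM p (xi k) E" if k: "k \<in> {1..N}" for k
    proof -
      have "ipS p (sigma k - Ys k) (Ys k - t k) = - ipS p (grad_h p (xi k)) (Ys k - t k)"
        unfolding ipS_def sum_negf[symmetric]
        by (rule sum.cong) (auto simp: Ys_def)
      also have "\<dots> = ipM p (xi k) E"
        using adjoint[of p "xi k" "Ys k - t k"] divD[OF k] by simp
      finally show ?thesis .
    qed
    have t2: "ipM p (nu - Ym) (Ym - m) = - (\<Sum>k=1..N. ipM p (xi k) E)"
    proof -
      have "ipM p (nu - Ym) (Ym - m) = (\<Sum>x\<in>grid p. \<Sum>k=1..N. - (xi k x * E x))"
        unfolding ipM_def
        by (rule sum.cong) (auto simp: Ym_def E_def sum_distrib_right sum_negf[symmetric])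
      also have "\<dots> = - (\<Sum>k=1..N. ipM p (xi k) E)"
        unfolding ipM_def sum_negf by (subst sum.swap) simp
      finally show ?thesis .
    qed
    have C0: "(\<Sum>k=1..N. ipS p (fst (sigma, nu) k - fst (Ys, Ym) k) (fst (Ys, Ym) k - fst z k))
            + ipM p (snd (sigma, nu) - snd (Ys, Ym)) (snd (Ys, Ym) - snd z) = 0"
      using t1 t2 unfolding tm by simp
    show "dist2 p N (sigma, nu) (Ys, Ym) \<le> dist2 p N (sigma, nu) z"
    proof -
      have "dist2 p N (sigma, nu) z = dist2 p N (sigma, nu) (Ys, Ym) + dist2 p N (Ys, Ym) z"
        using dist2_split[of p N "(sigma, nu)" z "(Ys, Ym)"] C0 by simp
      then show ?thesis using dist2_nonneg[of p N "(Ys, Ym)" z] by simp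
    qed
  qed
  then show "let xi = (\<lambda>i x. xi' i x - resolv p N (\<lambda>y. (\<Sum>j=1..N. xi' j y) / real N) x)
                 in is_proj p N (Fh p N nus) (sigma, nu)
                      (\<lambda>i x. sigma i x + grad_h p (xi i) x,
                       \<lambda>x. nu x + (\<Sum>j=1..N. xi j x))"
    unfolding Let_def Ys_def Ym_def xi_def W_def F_def .
qed


end
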